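(* Let $\lambda\in X^+$ be a $p$-core. Then $$\sum_{(\alpha,l)}\nu_p(lp)\,\chi(s_{\alpha,l}\cdot\lambda)=\sum_{(\alpha,l)\in R(\lambda)}\nu_p(lp)\,\chi(s_{\alpha,l}\cdot\lambda),$$ where the left sum runs over all pairs $(\alpha,l)$ with $\alpha$ a positive root, $l$ an integer $\ge1$ and $\langle\lambda+\rho,\alpha^\vee\rangle-lp>0$, and $\nu_p$ is the $p$-adic valuation. (The left side is the right-hand side of Jantzen's sum formula for $\sum_{i>0}\mathrm{ch}\,\Delta(\lambda)^i$.)
   Context: Setup: $p>2$ is a prime, $m\ge1$, $G=\mathrm{Sp}_{2m}$ over an algebraically closed field of characteristic $p$, with diagonal maximal torus and weight lattice $X=\mathbb Z^m$ (standard basis $\varepsilon_1,\dots,\varepsilon_m$). Positive roots: $\varepsilon_i\pm\varepsilon_j$ ($1\le i<j\le m$) and $2\varepsilon_i$ ($1\le i\le m$). With the standard inner product, $\alpha^\vee=2\alpha/\langle\alpha,\alpha\rangle$, so $(\varepsilon_i\pm\varepsilon_j)^\vee=\varepsilon_i\pm\varepsilon_j$ and $(2\varepsilon_i)^\vee=\varepsilon_i$. $X^+=\{\lambda\in\mathbb Z^m:\lambda_1\ge\dots\ge\lambda_m\ge0\}$, identified with partitions with at most $m$ parts; $l(\lambda)$ is the number of nonzero parts. $\rho=(m,m-1,\dots,1)$. For a root $\alpha$ and $l\in\mathbb Z$, $s_{\alpha,l}(x)=x-(\langle x,\alpha^\vee\rangle-lp)\alpha$ and $w\cdot x=w(x+\rho)-\rho$.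 For $\mu\in X$, $\chi(\mu)\in\mathbb Z[X]$ is the Weyl character; $\chi(\mu)=0$ iff some entry of $\mu+\rho$ is $0$ or two entries of $\mu+\rho$ are equal up to sign, and otherwise $\chi(\mu)=\det(w)\chi(w\cdot\mu)$ for the unique signed permutation $w$ with $w\cdot\mu$ dominant. A $p$-core is $\lambda\in X^+$ such that for all $i\in\{1,\dots,m\}$ and all integers $l\ge1$ with $(\lambda+\rho)_i-lp>0$, the number $(\lambda+\rho)_i-lp$ occurs as an entry of $\lambda+\rho$. $R(\lambda)$ is the set of pairs $(\alpha,l)$ with $\alpha=\varepsilon_i+\varepsilon_j$, $1\le i<j\le l(\lambda)$, $l\ge1$ an integer, $a:=\langle\lambda+\rho,\alpha^\vee\rangle-lp\ge1$, $(\lambda+\rho)_j-a>0$ and $\chi(s_{\alpha,l}\cdot\lambda)\ne0$. *)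

theory Defs
  imports "HOL-Library.Function_Algebras" "HOL-Library.Poly_Mapping"
    "HOL-Combinatorics.Permutations" "HOL-Computational_Algebra.Primes"
begin

(* Weights: X = Z^m, represented as functions nat => int, coordinates 1..m, zero elsewhere. *)
type_synonym weight = "nat \<Rightarrow> int"

(* Group ring Z[X] (on the ambient lattice nat => int, containing Z[Z^m]) *)
type_synonym ZX = "weight \<Rightarrow>\<^sub>0 int"

definition e :: "weight \<Rightarrow> ZX" where
  "e \<mu> = Poly_Mapping.single \<mu> 1"

definition rho :: "nat \<Rightarrow> weight" where
  "rho m = (\<lambda>i. if 1 \<le> i \<and> i \<le> m then int (m + 1 - i) else 0)"

definition valid_weight :: "nat \<Rightarrow> weight \<Rightarrow> bool" where
  "valid_weight m x \<longleftrightarrow> (\<forall>i. i \<notin> {1..m} \<longrightarrow> x i = 0)"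

definition dominant :: "nat \<Rightarrow> weight \<Rightarrow> bool" where
  "dominant m x \<longleftrightarrow> valid_weight m x \<and> (\<forall>i\<in>{1..m}. 0 \<le> x i) \<and>
     (\<forall>i j. 1 \<le> i \<longrightarrow> i \<le> j \<longrightarrow> j \<le> m \<longrightarrow> x j \<le> x i)"

definition num_parts :: "nat \<Rightarrow> weight \<Rightarrow> nat" where
  "num_parts m x = card {i\<in>{1..m}. x i \<noteq> 0}"

(* Weyl group W = signed permutations of {1..m}: (sigma, s) acts by x |-> (s_i * x_(sigma i))_i *)
definition weyl_group :: "nat \<Rightarrow> ((nat \<Rightarrow> nat) \<times> (nat \<Rightarrow> int)) set" where
  "weyl_group m = {(\<sigma>, s). \<sigma> permutes {1..m} \<and> (\<forall>i\<in>{1..m}. s i \<in> {1, -1}) \<and>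
                            (\<forall>i. i \<notin> {1..m} \<longrightarrow> s i = 1)}"

definition act :: "nat \<Rightarrow> (nat \<Rightarrow> nat) \<times> (nat \<Rightarrow> int) \<Rightarrow> weight \<Rightarrow> weight" where
  "act m w x = (\<lambda>i. if i \<in> {1..m} then snd w i * x (fst w i) else 0)"

definition sdet :: "nat \<Rightarrow> (nat \<Rightarrow> nat) \<times> (nat \<Rightarrow> int) \<Rightarrow> int" where
  "sdet m w = sign (fst w) * (\<Prod>i\<in>{1..m}. snd w i)"

definition dot :: "nat \<Rightarrow> (nat \<Rightarrow> nat) \<times> (nat \<Rightarrow> int) \<Rightarrow> weight \<Rightarrow> weight" where
  "dot m w x = (\<lambda>i. act m w (\<lambda>k. x k + rho m k) i - rho m i)"

definition alt :: "nat \<Rightarrow> weight \<Rightarrow> ZX" where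
  "alt m \<nu> = (\<Sum>w\<in>weyl_group m. of_int (sdet m w) * e (act m w \<nu>))"

(* Weyl character of a dominant weight, via Weyl's character formula *)
definition chi_dom :: "nat \<Rightarrow> weight \<Rightarrow> ZX" where
  "chi_dom m lam = (THE f. f * alt m (rho m) = alt m (\<lambda>i. lam i + rho m i))"

definition regular :: "nat \<Rightarrow> weight \<Rightarrow> bool" where
  "regular m x \<longleftrightarrow> (\<forall>i\<in>{1..m}. x i \<noteq> 0) \<and>
     (\<forall>i\<in>{1..m}. \<forall>j\<in>{1..m}. i \<noteq> j \<longrightarrow> \<bar>x i\<bar> \<noteq> \<bar>x j\<bar>)"

definition chi :: "nat \<Rightarrow> weight \<Rightarrow> ZX" where
  "chi m \<mu> = (if \<not> regular m (\<lambda>i. \<mu> i + rho m i) then 0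
     else (let w = (THE w. w \<in> weyl_group m \<and> dominant m (dot m w \<mu>))
           in of_int (sdet m w) * chi_dom m (dot m w \<mu>)))"

definition eps :: "nat \<Rightarrow> weight" where
  "eps i = (\<lambda>k. if k = i then 1 else 0)"

definition pos_roots :: "nat \<Rightarrow> weight set" where
  "pos_roots m =
     {(\<lambda>k. eps i k + eps j k) | i j. 1 \<le> i \<and> i < j \<and> j \<le> m} \<union>
     {(\<lambda>k. eps i k - eps j k) | i j. 1 \<le> i \<and> i < j \<and> j \<le> m} \<union>
     {(\<lambda>k. 2 * eps i k) | i. 1 \<le> i \<and> i \<le> m}"

definition inner :: "nat \<Rightarrow> weight \<Rightarrow> weight \<Rightarrow> int" where
  "inner m x y = (\<Sum>k\<in>{1..m}. x k * y k)"

(* alpha^vee = 2 alpha / <alpha,alpha> (exact for the roots of C_m) *)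
definition coroot :: "nat \<Rightarrow> weight \<Rightarrow> weight" where
  "coroot m \<alpha> = (\<lambda>k. (2 * \<alpha> k) div inner m \<alpha> \<alpha>)"

definition pair :: "nat \<Rightarrow> weight \<Rightarrow> weight \<Rightarrow> int" where
  "pair m x \<alpha> = inner m x (coroot m \<alpha>)"

definition aff_refl :: "nat \<Rightarrow> nat \<Rightarrow> weight \<Rightarrow> int \<Rightarrow> weight \<Rightarrow> weight" where
  "aff_refl m p \<alpha> l x = (\<lambda>k. x k - (pair m x \<alpha> - l * int p) * \<alpha> k)"

definition aff_dot :: "nat \<Rightarrow> nat \<Rightarrow> weight \<Rightarrow> int \<Rightarrow> weight \<Rightarrow> weight" where
  "aff_dot m p \<alpha> l x = (\<lambda>k. aff_refl m p \<alpha> l (\<lambda>i. x i + rho m i) k - rho m k)"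

definition p_core :: "nat \<Rightarrow> nat \<Rightarrow> weight \<Rightarrow> bool" where
  "p_core m p lam \<longleftrightarrow> dominant m lam \<and>
     (\<forall>i\<in>{1..m}. \<forall>l::int. l \<ge> 1 \<longrightarrow> lam i + rho m i - l * int p > 0 \<longrightarrow>
        (\<exists>k\<in>{1..m}. lam k + rho m k = lam i + rho m i - l * int p))"

definition jantzen_pairs :: "nat \<Rightarrow> nat \<Rightarrow> weight \<Rightarrow> (weight \<times> int) set" where
  "jantzen_pairs m p lam = {(\<alpha>, l). \<alpha> \<in> pos_roots m \<and> l \<ge> 1 \<and>
      pair m (\<lambda>i. lam i + rho m i) \<alpha> - l * int p > 0}"

definition R_set :: "nat \<Rightarrow> nat \<Rightarrow> weight \<Rightarrow> (weight \<times> int) set" where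
  "R_set m p lam = {(\<alpha>, l). \<exists>i j. \<alpha> = (\<lambda>k. eps i k + eps j k) \<and>
      1 \<le> i \<and> i < j \<and> j \<le> num_parts m lam \<and> l \<ge> 1 \<and>
      (let a = pair m (\<lambda>k. lam k + rho m k) \<alpha> - l * int p in
         a \<ge> 1 \<and> lam j + rho m j - a > 0) \<and>
      chi m (aff_dot m p \<alpha> l lam) \<noteq> 0}"

definition jantzen_term :: "nat \<Rightarrow> nat \<Rightarrow> weight \<Rightarrow> weight \<times> int \<Rightarrow> ZX" where
  "jantzen_term m p lam al =
     of_nat (multiplicity (int p) (snd al * int p)) * chi m (aff_dot m p (fst al) (snd al) lam)"

end

theory Submission
  imports Defs
begin


lemma decr_gap:
  fixes f :: "nat \<Rightarrow> int"
  assumes "\<forall>i j. 1\<le>i \<longrightarrow> i<j \<longrightarrow> j\<le>m \<longrightarrow> f j < f i"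
  shows "1\<le>i \<Longrightarrow> i\<le>j \<Longrightarrow> j\<le>m \<Longrightarrow> f j + int (j - i) \<le> f i"
proof (induction j)
  case 0 then show ?case by simp
next
  case (Suc j)
  show ?case
  proof (cases "i = Suc j")
    case True then show ?thesis by simp
  next
    case False
    then have "i \<le> j" using Suc by simp
    then have "f j + int (j - i) \<le> f i" using Suc by simp
    moreover have "f (Suc j) < f j" using assms Suc \<open>i \<le> j\<close> by auto
    ultimately show ?thesis using \<open>i \<le> j\<close> by (simp add: of_nat_diff)
  qed
qed

lemma sorted_unique:
  fixes f :: "nat \<Rightarrow> int"
  assumes dec: "\<forall>i j. 1\<le>i \<longrightarrow> i<j \<longrightarrow> j\<le>m \<longrightarrow> f j < f i"
    and img: "f ` {1..m} = S" and i: "i \<in> {1..m}"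
  shows "f i = sorted_list_of_set S ! (m - i)"
proof -
  define M where "M = map (\<lambda>k. f (m - k)) [0..<m]"
  have len: "length M = m" by (simp add: M_def)
  have nth: "k < m \<Longrightarrow> M ! k = f (m - k)" for k by (simp add: M_def)
  have srt: "sorted_wrt (<) M"
    unfolding sorted_wrt_iff_nth_less len
  proof (intro allI impI)
    fix a b assume "a < b" "b < m"
    then show "M ! a < M ! b" using nth[of a] nth[of b] dec by auto
  qed
  have "set M = S"
  proof
    show "set M \<subseteq> S" using img by (auto simp: M_def)
  next
    show "S \<subseteq> set M"
    proof
      fix s assume "s \<in> S"
      then obtain k where k: "k \<in> {1..m}" "s = f k" using img by auto
      then have "M ! (m - k) = s" using nth[of "m-k"] by auto
      moreover have "m - k < length M" using k len by auto
      ultimately show "s \<in> set M" using nth_mem by metis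
    qed
  qed
  have fin: "finite S" using img by auto
  have "sorted_list_of_set S = M"
    using strict_sorted_equal[OF srt sorted_list_of_set.strict_sorted_key_list_of_set]
      \<open>set M = S\<close> fin by (metis sorted_list_of_set.set_sorted_key_list_of_set)
  then show ?thesis using nth[of "m - i"] i by auto
qed

lemma rho_val: "i \<in> {1..m} \<Longrightarrow> rho m i = int m + 1 - int i"
  by (auto simp: rho_def of_nat_diff)

lemma rho_out: "i \<notin> {1..m} \<Longrightarrow> rho m i = 0"
  by (auto simp: rho_def)

lemma act_out: "i \<notin> {1..m} \<Longrightarrow> act m w y i = 0"
  by (auto simp: act_def)

lemma dominant_iff:
  "dominant m (\<lambda>i. act m w y i - rho m i) \<longleftrightarrow>
   (\<forall>i j. 1\<le>i \<longrightarrow> i<j \<longrightarrow> j\<le>m \<longrightarrow> act m w y j < act m w y i) \<and> (\<forall>i\<in>{1..m}. 0 < act m w y i)"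
  (is "?L \<longleftrightarrow> ?A \<and> ?B")
proof
  assume L: ?L
  have A: ?A
  proof (intro allI impI)
    fix i j :: nat assume "1 \<le> i" "i < j" "j \<le> m"
    then have "act m w y j - rho m j \<le> act m w y i - rho m i" using L unfolding dominant_def by auto
    then show "act m w y j < act m w y i" using \<open>1 \<le> i\<close> \<open>i < j\<close> \<open>j \<le> m\<close> rho_val[of i m] rho_val[of j m] by auto
  qed
  have B: ?B
  proof
    fix i assume "i \<in> {1..m}"
    then have "rho m i \<le> act m w y i" using L unfolding dominant_def by auto
    then show "0 < act m w y i" using rho_val[of i m] \<open>i \<in> {1..m}\<close> by auto
  qed
  show "?A \<and> ?B" using A B by blast
next
  assume AB: "?A \<and> ?B"
  then have A: ?A and B: ?B by auto
  note gap = decr_gap[OF A]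
  show ?L unfolding dominant_def valid_weight_def
  proof (intro conjI allI impI ballI)
    fix i assume "i \<notin> {1..m}" then show "act m w y i - rho m i = 0" by (simp add: act_out rho_out)
  next
    fix i assume i: "i \<in> {1..m}"
    have "act m w y m + int (m - i) \<le> act m w y i" using gap[of i m] i by auto
    moreover have "0 < act m w y m" using B i by auto
    ultimately show "0 \<le> act m w y i - rho m i" using rho_val[OF i] i by (auto simp: of_nat_diff)
  next
    fix i j :: nat assume "1 \<le> i" "i \<le> j" "j \<le> m"
    then show "act m w y j - rho m j \<le> act m w y i - rho m i"
      using gap[of i j] rho_val[of i m] rho_val[of j m] by (auto simp: of_nat_diff)
  qed
qed

lemma act_pos_abs:
  assumes w: "w \<in> weyl_group m" and i: "i \<in> {1..m}" and pos: "0 < act m w y i"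
  shows "act m w y i = \<bar>y (fst w i)\<bar>"
proof -
  have "snd w i \<in> {1,-1}" using w i by (auto simp: weyl_group_def)
  then show ?thesis using pos i by (auto simp: act_def)
qed

lemma regular_inj:
  assumes "regular m y" "a \<in> {1..m}" "b \<in> {1..m}" "\<bar>y a\<bar> = \<bar>y b\<bar>"
  shows "a = b"
  using assms unfolding regular_def by blast

lemma uniq_w:
  assumes reg: "regular m y"
    and w: "w \<in> weyl_group m" and dw: "dominant m (\<lambda>i. act m w y i - rho m i)"
    and w': "w' \<in> weyl_group m" and dw': "dominant m (\<lambda>i. act m w' y i - rho m i)"
  shows "w = w'"
proof -
  define S where "S = (\<lambda>k. \<bar>y k\<bar>) ` {1..m}"
  have val: "act m v y i = sorted_list_of_set S ! (m - i)"
    if v: "v \<in> weyl_group m" and dv: "dominant m (\<lambda>i. act m v y i - rho m i)" and i: "i \<in> {1..m}" for v i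
  proof -
    have A: "\<forall>i j. 1\<le>i \<longrightarrow> i<j \<longrightarrow> j\<le>m \<longrightarrow> act m v y j < act m v y i"
      and B: "\<forall>i\<in>{1..m}. 0 < act m v y i" using dv dominant_iff by blast+
    have perm: "fst v permutes {1..m}" using v by (auto simp: weyl_group_def)
    have "act m v y ` {1..m} = (\<lambda>k. \<bar>y k\<bar>) ` (fst v ` {1..m})"
    proof -
      have "act m v y ` {1..m} = (\<lambda>k. \<bar>y (fst v k)\<bar>) ` {1..m}"
        using act_pos_abs[OF v] B by (intro image_cong) auto
      then show ?thesis by (simp add: image_image)
    qed
    also have "\<dots> = S" using permutes_image[OF perm] S_def by simp
    finally show ?thesis using sorted_unique[OF A _ i] by blast
  qed
  obtain \<sigma> s where ws: "w = (\<sigma>, s)" by fastforce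
  obtain \<sigma>' s' where ws': "w' = (\<sigma>', s')" by fastforce
  have p: "\<sigma> permutes {1..m}" and p': "\<sigma>' permutes {1..m}"
    and sv: "\<forall>i\<in>{1..m}. s i \<in> {1,-1}" and sv': "\<forall>i\<in>{1..m}. s' i \<in> {1,-1}"
    and so: "\<forall>i. i \<notin> {1..m} \<longrightarrow> s i = 1" and so': "\<forall>i. i \<notin> {1..m} \<longrightarrow> s' i = 1"
    using w w' ws ws' by (auto simp: weyl_group_def)
  have B: "\<forall>i\<in>{1..m}. 0 < act m w y i" and B': "\<forall>i\<in>{1..m}. 0 < act m w' y i"
    using dw dw' dominant_iff by blast+
  have eqs: "\<sigma> i = \<sigma>' i \<and> s i = s' i" for i
  proof (cases "i \<in> {1..m}")
    case True
    have e: "act m w y i = act m w' y i" using val[OF w dw True] val[OF w' dw' True] by simp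
    have "\<bar>y (\<sigma> i)\<bar> = \<bar>y (\<sigma>' i)\<bar>"
      using act_pos_abs[OF w True] act_pos_abs[OF w' True] B B' True e ws ws' by auto
    moreover have "\<sigma> i \<in> {1..m}" "\<sigma>' i \<in> {1..m}"
      using permutes_in_image[OF p] permutes_in_image[OF p'] True by blast+
    ultimately have si: "\<sigma> i = \<sigma>' i" using regular_inj[OF reg] by blast
    have "y (\<sigma> i) \<noteq> 0" using reg \<open>\<sigma> i \<in> {1..m}\<close> unfolding regular_def by blast
    moreover have "s i * y (\<sigma> i) = s' i * y (\<sigma> i)" using e si True ws ws' by (simp add: act_def)
    ultimately show ?thesis using si by simp
  next
    case False
    then show ?thesis using p p' so so' by (simp add: permutes_not_in)
  qed
  then show ?thesis using ws ws' by (auto simp: fun_eq_iff)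
qed

lemma exist_w:
  assumes reg: "regular m y"
  shows "\<exists>w \<in> weyl_group m. dominant m (\<lambda>i. act m w y i - rho m i)"
proof -
  define g where "g = (\<lambda>k. \<bar>y k\<bar>)"
  define S where "S = g ` {1..m}"
  define L where "L = sorted_list_of_set S"
  have inj: "inj_on g {1..m}" using regular_inj[OF reg] by (auto simp: inj_on_def g_def)
  have fin: "finite S" by (simp add: S_def)
  have cardS: "card S = m" using card_image[OF inj] by (simp add: S_def)
  have lenL: "length L = m" using cardS L_def by simp
  have setL: "set L = S" using fin L_def by simp
  have dL: "distinct L" using L_def by simp
  have sL: "sorted_wrt (<) L" using L_def by (simp add: sorted_list_of_set.strict_sorted_key_list_of_set)
  have Spos: "\<And>v. v \<in> S \<Longrightarrow> 0 < v" using reg unfolding S_def g_def regular_def by auto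
  define z where "z = (\<lambda>i. L ! (m - i))"
  have zS: "z i \<in> S" if "i\<in>{1..m}" for i
    using that lenL setL nth_mem[of "m - i" L] by (auto simp: z_def)
  have zinj: "inj_on z {1..m}"
  proof (rule inj_onI)
    fix a b assume a: "a \<in> {1..m}" and b: "b \<in> {1..m}" and e: "z a = z b"
    then have "m - a = m - b" using nth_eq_iff_index_eq[OF dL, of "m-a" "m-b"] lenL by (auto simp: z_def)
    then show "a = b" using a b by auto
  qed
  have zdec: "\<forall>i j. 1\<le>i \<longrightarrow> i<j \<longrightarrow> j\<le>m \<longrightarrow> z j < z i"
  proof (intro allI impI)
    fix i j :: nat assume "1\<le>i" "i<j" "j\<le>m"
    then show "z j < z i" using sorted_wrt_nth_less[OF sL, of "m - j" "m - i"] lenL by (simp add: z_def)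
  qed
  define \<sigma> where "\<sigma> = (\<lambda>i. if i\<in>{1..m} then the_inv_into {1..m} g (z i) else i)"
  have \<sigma>in: "\<sigma> i \<in> {1..m}" if "i\<in>{1..m}" for i
    using the_inv_into_into[OF inj, of "z i" "{1..m}"] zS[OF that] that by (simp add: \<sigma>_def S_def)
  have g\<sigma>: "g (\<sigma> i) = z i" if "i\<in>{1..m}" for i
    using f_the_inv_into_f[OF inj, of "z i"] zS[OF that] that by (simp add: \<sigma>_def S_def)
  have \<sigma>inj: "inj_on \<sigma> {1..m}"
  proof (rule inj_onI)
    fix a b assume a: "a \<in> {1..m}" and b: "b \<in> {1..m}" and e: "\<sigma> a = \<sigma> b"
    then have "z a = z b" using g\<sigma>[OF a] g\<sigma>[OF b] by simp
    then show "a = b" using zinj a b by (auto dest: inj_onD)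
  qed
  have \<sigma>img: "\<sigma> ` {1..m} = {1..m}" proof -
    have "\<sigma> ` {1..m} \<subseteq> {1..m}" using \<sigma>in by blast
    then show ?thesis using endo_inj_surj[OF _ _ \<sigma>inj] by blast
  qed
  have perm: "\<sigma> permutes {1..m}"
  proof (rule bij_imp_permutes)
    show "bij_betw \<sigma> {1..m} {1..m}" using \<sigma>inj \<sigma>img by (simp add: bij_betw_def)
  next
    fix x :: nat assume "x \<notin> {1..m}" then show "\<sigma> x = x" by (auto simp: \<sigma>_def)
  qed
  define s where "s = (\<lambda>i. if i \<in> {1..m} then sgn (y (\<sigma> i)) else (1::int))"
  have ynz: "y (\<sigma> i) \<noteq> 0" if "i\<in>{1..m}" for i using reg \<sigma>in[OF that] unfolding regular_def by blast
  have ws: "(\<sigma>, s) \<in> weyl_group m"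
    using perm ynz by (auto simp: weyl_group_def s_def sgn_if)
  have actz: "act m (\<sigma>, s) y i = z i" if i: "i\<in>{1..m}" for i
  proof -
    have "act m (\<sigma>, s) y i = sgn (y (\<sigma> i)) * y (\<sigma> i)" using i by (simp add: act_def s_def)
    also have "\<dots> = g (\<sigma> i)" by (simp add: g_def abs_sgn mult.commute)
    finally show ?thesis using g\<sigma>[OF i] by simp
  qed
  have "dominant m (\<lambda>i. act m (\<sigma>, s) y i - rho m i)"
    unfolding dominant_iff
  proof (intro conjI allI impI ballI)
    fix i j :: nat assume "1\<le>i" "i<j" "j\<le>m"
    then show "act m (\<sigma>, s) y j < act m (\<sigma>, s) y i" using zdec actz by auto
  next
    fix i assume "i \<in> {1..m}"
    then show "0 < act m (\<sigma>, s) y i" using actz zS Spos by auto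
  qed
  then show ?thesis using ws by blast
qed

lemma ex1_w:
  assumes reg: "regular m y"
  shows "\<exists>!w. w \<in> weyl_group m \<and> dominant m (\<lambda>i. act m w y i - rho m i)"
  using exist_w[OF reg] uniq_w[OF reg] by blast

lemma chi_flip:
  assumes j: "j \<in> {1..m}"
    and flip: "\<And>k. \<mu>' k + rho m k = (if k = j then -(\<mu> k + rho m k) else \<mu> k + rho m k)"
  shows "chi m \<mu>' = - chi m \<mu>"
proof -
  define y where "y = (\<lambda>k. \<mu> k + rho m k)"
  define y' where "y' = (\<lambda>k. \<mu>' k + rho m k)"
  have yy': "\<And>k. y' k = (if k = j then - y k else y k)" using flip by (simp add: y_def y'_def)
  have absq: "\<And>k. \<bar>y' k\<bar> = \<bar>y k\<bar>" using yy' by simp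
  have zq: "\<And>k. y' k = 0 \<longleftrightarrow> y k = 0" using yy' by simp
  have regeq: "regular m y' \<longleftrightarrow> regular m y" unfolding regular_def using absq zq by simp
  show ?thesis
  proof (cases "regular m y")
    case False
    then show ?thesis using regeq unfolding chi_def y_def y'_def by simp
  next
    case True
    have True': "regular m y'" using True regeq by simp
    define \<Phi> where "\<Phi> = (\<lambda>w::(nat\<Rightarrow>nat)\<times>(nat\<Rightarrow>int). (fst w, \<lambda>i. if i\<in>{1..m} \<and> fst w i = j then - snd w i else snd w i))"
    have dot_eq: "\<And>w. dot m w \<mu> = (\<lambda>i. act m w y i - rho m i)" by (simp add: dot_def y_def)
    have dot_eq': "\<And>w. dot m w \<mu>' = (\<lambda>i. act m w y' i - rho m i)" by (simp add: dot_def y'_def)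
    define w where "w = (THE w. w \<in> weyl_group m \<and> dominant m (dot m w \<mu>))"
    have wP: "w \<in> weyl_group m \<and> dominant m (dot m w \<mu>)"
      using theI'[OF ex1_w[OF True]] unfolding w_def dot_eq by simp
    obtain \<sigma> s where ws: "w = (\<sigma>, s)" by fastforce
    have p: "\<sigma> permutes {1..m}" and sv: "\<forall>i\<in>{1..m}. s i \<in> {1,-1}"
      and so: "\<forall>i. i \<notin> {1..m} \<longrightarrow> s i = 1" using wP ws by (auto simp: weyl_group_def)
    have \<Phi>w: "\<Phi> w \<in> weyl_group m" using p sv so ws by (auto simp: weyl_group_def \<Phi>_def)
    have actq: "act m (\<Phi> w) y' = act m w y"
      using ws by (auto simp: fun_eq_iff act_def \<Phi>_def yy')
    have dq: "dot m (\<Phi> w) \<mu>' = dot m w \<mu>" using actq by (simp add: dot_eq dot_eq')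
    have the': "(THE w. w \<in> weyl_group m \<and> dominant m (dot m w \<mu>')) = \<Phi> w"
    proof (rule the1_equality)
      show "\<exists>!w. w \<in> weyl_group m \<and> dominant m (dot m w \<mu>')" using ex1_w[OF True'] by (simp add: dot_eq')
      show "\<Phi> w \<in> weyl_group m \<and> dominant m (dot m (\<Phi> w) \<mu>')" using \<Phi>w dq wP by simp
    qed
    define i0 where "i0 = inv \<sigma> j"
    have i0: "i0 \<in> {1..m}" using permutes_in_image[OF permutes_inv[OF p]] j unfolding i0_def by blast
    have iff: "\<And>i. \<sigma> i = j \<longleftrightarrow> i = i0"
      using permutes_inverses[OF p] unfolding i0_def by metis
    have "(\<Prod>i\<in>{1..m}. snd (\<Phi> w) i) = (\<Prod>i\<in>{1..m}. s i * (if i = i0 then -1 else 1))"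
      by (rule prod.cong) (auto simp: \<Phi>_def ws iff)
    also have "\<dots> = (\<Prod>i\<in>{1..m}. s i) * (\<Prod>i\<in>{1..m}. (if i = i0 then -1 else 1))"
      by (rule prod.distrib)
    also have "(\<Prod>i\<in>{1..m}. (if i = i0 then -1 else 1)) = (-1::int)"
      using i0 by (simp add: prod.delta)
    finally have sd: "sdet m (\<Phi> w) = - sdet m w" by (simp add: sdet_def ws \<Phi>_def)
    have c1: "chi m \<mu> = of_int (sdet m w) * chi_dom m (dot m w \<mu>)"
      using True unfolding chi_def y_def w_def by (simp add: Let_def)
    have c2: "chi m \<mu>' = of_int (sdet m (\<Phi> w)) * chi_dom m (dot m (\<Phi> w) \<mu>')"
      using True' the' unfolding chi_def y'_def by (simp add: Let_def)
    show ?thesis using c1 c2 sd dq by simp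
  qed
qed

lemma chi_nonreg:
  assumes "\<not> regular m (\<lambda>k. \<mu> k + rho m k)" shows "chi m \<mu> = 0"
  using assms by (simp add: chi_def)



definition rp :: "nat \<Rightarrow> nat \<Rightarrow> weight" where "rp i j = (\<lambda>k. eps i k + eps j k)"
definition rm :: "nat \<Rightarrow> nat \<Rightarrow> weight" where "rm i j = (\<lambda>k. eps i k - eps j k)"
definition rl :: "nat \<Rightarrow> weight" where "rl i = (\<lambda>k. 2 * eps i k)"

lemma sum_eps: "1 \<le> i \<Longrightarrow> i \<le> m \<Longrightarrow> (\<Sum>k\<in>{1..m}. y k * eps i k) = y i"
proof -
  assume i: "1 \<le> i" "i \<le> m"
  have "(\<Sum>k\<in>{1..m}. y k * eps i k) = (\<Sum>k\<in>{1..m}. if k = i then y k else 0)"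
    by (rule sum.cong) (auto simp: eps_def)
  also have "\<dots> = y i" using i by (simp add: sum.delta')
  finally show ?thesis .
qed

lemma inner_rp: "1 \<le> i \<Longrightarrow> i < j \<Longrightarrow> j \<le> m \<Longrightarrow> inner m y (rp i j) = y i + y j"
  using sum_eps[of i m y] sum_eps[of j m y]
  unfolding inner_def rp_def by (simp add: distrib_left sum.distrib)

lemma inner_rm: "1 \<le> i \<Longrightarrow> i < j \<Longrightarrow> j \<le> m \<Longrightarrow> inner m y (rm i j) = y i - y j"
  using sum_eps[of i m y] sum_eps[of j m y]
  unfolding inner_def rm_def by (simp add: right_diff_distrib sum_subtractf)

lemma inner_eps: "1 \<le> i \<Longrightarrow> i \<le> m \<Longrightarrow> inner m y (eps i) = y i"
  using sum_eps[of i m y] unfolding inner_def by simp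

lemma inner_rl: "1 \<le> i \<Longrightarrow> i \<le> m \<Longrightarrow> inner m y (rl i) = 2 * y i"
proof -
  assume "1 \<le> i" "i \<le> m"
  then have "inner m y (rl i) = 2 * inner m y (eps i)" unfolding inner_def rl_def
    by (simp add: sum_distrib_left algebra_simps)
  then show ?thesis using inner_eps \<open>1 \<le> i\<close> \<open>i \<le> m\<close> by simp
qed

lemma pair_rp: "1 \<le> i \<Longrightarrow> i < j \<Longrightarrow> j \<le> m \<Longrightarrow> pair m y (rp i j) = y i + y j"
proof -
  assume a: "1 \<le> i" "i < j" "j \<le> m"
  have "inner m (rp i j) (rp i j) = 2" using inner_rp[OF a] a by (simp add: rp_def eps_def)
  then have "coroot m (rp i j) = rp i j" by (simp add: coroot_def)
  then show ?thesis using inner_rp[OF a] by (simp add: pair_def)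
qed

lemma pair_rm: "1 \<le> i \<Longrightarrow> i < j \<Longrightarrow> j \<le> m \<Longrightarrow> pair m y (rm i j) = y i - y j"
proof -
  assume a: "1 \<le> i" "i < j" "j \<le> m"
  have "inner m (rm i j) (rm i j) = 2" using inner_rm[OF a] a by (simp add: rm_def eps_def)
  then have "coroot m (rm i j) = rm i j" by (auto simp: coroot_def fun_eq_iff rm_def eps_def)
  then show ?thesis using inner_rm[OF a] by (simp add: pair_def)
qed

lemma pair_rl: "1 \<le> i \<Longrightarrow> i \<le> m \<Longrightarrow> pair m y (rl i) = y i"
proof -
  assume a: "1 \<le> i" "i \<le> m"
  have "inner m (rl i) (rl i) = 4" using inner_rl[OF a] a by (simp add: rl_def eps_def)
  then have "coroot m (rl i) = eps i" by (auto simp: coroot_def fun_eq_iff rl_def eps_def)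
  then show ?thesis using inner_eps[OF a] by (simp add: pair_def)
qed

lemma pos_roots_cases:
  "\<alpha> \<in> pos_roots m \<longleftrightarrow> (\<exists>i j. 1\<le>i \<and> i<j \<and> j\<le>m \<and> (\<alpha> = rp i j \<or> \<alpha> = rm i j)) \<or> (\<exists>i. 1\<le>i \<and> i\<le>m \<and> \<alpha> = rl i)"
  unfolding pos_roots_def rp_def rm_def rl_def by blast

lemma finite_pos_roots: "finite (pos_roots m)"
proof -
  have "pos_roots m \<subseteq> (\<lambda>(i,j). rp i j) ` ({1..m}\<times>{1..m}) \<union> (\<lambda>(i,j). rm i j) ` ({1..m}\<times>{1..m}) \<union> rl ` {1..m}"
  proof
    fix \<alpha> assume "\<alpha> \<in> pos_roots m"
    then consider (a) i j where "1\<le>i" "i<j" "j\<le>m" "\<alpha> = rp i j" | (b) i j where "1\<le>i" "i<j" "j\<le>m" "\<alpha> = rm i j"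
      | (c) i where "1\<le>i" "i\<le>m" "\<alpha> = rl i" unfolding pos_roots_cases by blast
    then show "\<alpha> \<in> (\<lambda>(i,j). rp i j) ` ({1..m}\<times>{1..m}) \<union> (\<lambda>(i,j). rm i j) ` ({1..m}\<times>{1..m}) \<union> rl ` {1..m}"
    proof cases
      case (a i j) then have "(i,j) \<in> {1..m}\<times>{1..m}" by auto
      then show ?thesis using a by force
    next
      case (b i j) then have "(i,j) \<in> {1..m}\<times>{1..m}" by auto
      then show ?thesis using b by force
    next
      case (c i) then show ?thesis by force
    qed
  qed
  then show ?thesis by (rule finite_subset) auto
qed

lemma rp_val: "rp i j k = (if k = i then 1 else 0) + (if k = j then 1 else 0)"
  by (simp add: rp_def eps_def)
lemma rm_val: "rm i j k = (if k = i then 1 else 0) - (if k = j then 1 else 0)"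
  by (simp add: rm_def eps_def)
lemma rl_val: "rl i k = (if k = i then 2 else 0)"
  by (simp add: rl_def eps_def)

lemma rp_inj: "i < j \<Longrightarrow> i' < j' \<Longrightarrow> rp i j = rp i' j' \<Longrightarrow> i = i' \<and> j = j'"
proof -
  assume a: "i < j" "i' < j'" "rp i j = rp i' j'"
  have "rp i j i = rp i' j' i" "rp i j j = rp i' j' j" "rp i j i' = rp i' j' i'" using a(3) by auto
  then show ?thesis using a(1,2) unfolding rp_val by (auto split: if_splits)
qed

lemma rl_ne_rp: "i' < j' \<Longrightarrow> rl i \<noteq> rp i' j'"
proof
  assume a: "i' < j'" "rl i = rp i' j'"
  then have "rl i i = rp i' j' i" by simp
  then show False using a(1) unfolding rp_val rl_val by (auto split: if_splits)
qed

lemma rl_inj: "rl i = rl i' \<Longrightarrow> i = i'"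
proof -
  assume "rl i = rl i'"
  then have "rl i i = rl i' i" by simp
  then show ?thesis unfolding rl_val by (auto split: if_splits)
qed

lemma nonreg_eq: "a \<in> {1..m} \<Longrightarrow> b \<in> {1..m} \<Longrightarrow> a \<noteq> b \<Longrightarrow> \<bar>z a\<bar> = \<bar>z b\<bar> \<Longrightarrow> \<not> regular m z"
  unfolding regular_def by blast

lemma nonreg_zero: "a \<in> {1..m} \<Longrightarrow> z a = 0 \<Longrightarrow> \<not> regular m z"
  unfolding regular_def by blast

lemma aff_dot_rho: "aff_dot m p \<alpha> l lam k + rho m k =
   (lam k + rho m k) - (pair m (\<lambda>i. lam i + rho m i) \<alpha> - l * int p) * \<alpha> k"
  by (simp add: aff_dot_def aff_refl_def)

lemma num_parts_le: "num_parts m lam \<le> m"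
proof -
  have "num_parts m lam \<le> card {1..m}" unfolding num_parts_def by (rule card_mono) auto
  then show ?thesis by simp
qed

lemma num_parts_ge:
  assumes "dominant m lam" "j \<in> {1..m}" "lam j \<noteq> 0"
  shows "j \<le> num_parts m lam"
proof -
  have "{1..j} \<subseteq> {i\<in>{1..m}. lam i \<noteq> 0}"
  proof
    fix i assume i: "i \<in> {1..j}"
    have "lam j \<le> lam i" "0 \<le> lam j" using assms i unfolding dominant_def by auto
    then show "i \<in> {i\<in>{1..m}. lam i \<noteq> 0}" using i assms(2,3) by auto
  qed
  then have "card {1..j} \<le> num_parts m lam" unfolding num_parts_def by (rule card_mono[rotated]) auto
  then show ?thesis by simp
qed



theorem mainTheorem2:
  fixes m p :: nat and lam :: weight
  assumes "prime p" and "p > 2" and "m \<ge> 1"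
    and "p_core m p lam"
  shows "(\<Sum>al\<in>jantzen_pairs m p lam. jantzen_term m p lam al)
       = (\<Sum>al\<in>R_set m p lam. jantzen_term m p lam al)"
proof -
  define x where "x = (\<lambda>i. lam i + rho m i)"
  define f where "f = jantzen_term m p lam"
  define P where "P = jantzen_pairs m p lam"
  define R where "R = R_set m p lam"
  have dom: "dominant m lam" using assms(4) by (simp add: p_core_def)
  have p3: "int p \<ge> 3" using assms(2) by simp
  have xval: "\<And>i. i\<in>{1..m} \<Longrightarrow> x i = lam i + int m + 1 - int i" using rho_val by (simp add: x_def)
  have lam0: "\<And>i. i\<in>{1..m} \<Longrightarrow> 0 \<le> lam i" using dom by (simp add: dominant_def)
  have lamdec: "\<And>i j. 1\<le>i \<Longrightarrow> i\<le>j \<Longrightarrow> j\<le>m \<Longrightarrow> lam j \<le> lam i" using dom by (simp add: dominant_def)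
  have xpos: "\<And>i. i\<in>{1..m} \<Longrightarrow> 1 \<le> x i" using xval lam0 by force
  have xdec: "\<And>i j. 1\<le>i \<Longrightarrow> i<j \<Longrightarrow> j\<le>m \<Longrightarrow> x j < x i"
  proof -
    fix i j :: nat assume a: "1\<le>i" "i<j" "j\<le>m"
    then have "lam j \<le> lam i" using lamdec by simp
    then show "x j < x i" using xval[of i] xval[of j] a by simp
  qed
  have xlt: "\<And>i j. i\<in>{1..m} \<Longrightarrow> j\<in>{1..m} \<Longrightarrow> x j < x i \<Longrightarrow> i < j"
  proof -
    fix i j :: nat assume a: "i\<in>{1..m}" "j\<in>{1..m}" "x j < x i"
    show "i < j"
    proof (rule ccontr)
      assume "\<not> i < j"
      then have "j < i \<or> j = i" by auto
      then show False using xdec[of j i] a by auto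
    qed
  qed
  have xinj: "\<And>i j. i\<in>{1..m} \<Longrightarrow> j\<in>{1..m} \<Longrightarrow> x i = x j \<Longrightarrow> i = j"
  proof -
    fix i j :: nat assume a: "i\<in>{1..m}" "j\<in>{1..m}" "x i = x j"
    show "i = j"
    proof (rule ccontr)
      assume "i \<noteq> j"
      then have "i < j \<or> j < i" by auto
      then show False using xdec[of i j] xdec[of j i] a by auto
    qed
  qed
  have core: "\<And>i l. i\<in>{1..m} \<Longrightarrow> l \<ge> 1 \<Longrightarrow> x i - l * int p > 0 \<Longrightarrow> \<exists>k\<in>{1..m}. x k = x i - l * int p"
    using assms(4) unfolding p_core_def x_def by blast
  have Pdef: "P = {(\<alpha>,l). \<alpha> \<in> pos_roots m \<and> l \<ge> 1 \<and> pair m x \<alpha> - l * int p > 0}"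
    by (simp add: P_def jantzen_pairs_def x_def)
  have Rmem: "\<And>\<alpha> l. (\<alpha>,l) \<in> R \<longleftrightarrow> (\<exists>i j. \<alpha> = rp i j \<and> 1 \<le> i \<and> i < j \<and> j \<le> num_parts m lam \<and> l \<ge> 1 \<and>
       pair m x \<alpha> - l*int p \<ge> 1 \<and> x j - (pair m x \<alpha> - l*int p) > 0 \<and> chi m (aff_dot m p \<alpha> l lam) \<noteq> 0)"
    unfolding R_def R_set_def rp_def x_def Let_def by simp
  have fdef: "\<And>\<alpha> l. f (\<alpha>,l) = of_nat (multiplicity (int p) (l * int p)) * chi m (aff_dot m p \<alpha> l lam)"
    by (simp add: f_def jantzen_term_def)
  have affv: "\<And>\<alpha> l. (\<lambda>k. aff_dot m p \<alpha> l lam k + rho m k) = (\<lambda>k. x k - (pair m x \<alpha> - l * int p) * \<alpha> k)"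
    using aff_dot_rho unfolding x_def by presburger
  have chi0: "\<And>\<alpha> l. \<not> regular m (\<lambda>k. x k - (pair m x \<alpha> - l * int p) * \<alpha> k) \<Longrightarrow> chi m (aff_dot m p \<alpha> l lam) = 0"
    using chi_nonreg affv by metis
  have lpge: "\<And>l. l \<ge> 1 \<Longrightarrow> l * int p \<ge> 3"
  proof -
    fix l :: int assume "l \<ge> 1"
    then have "1 * int p \<le> l * int p" by (intro mult_right_mono) auto
    then show "l * int p \<ge> 3" using p3 by linarith
  qed
  define T2 where "T2 = {(rl i, l) | i (l::int). i \<in> {1..m} \<and> l \<ge> 1 \<and> x i - l * int p > 0}"
  define C where "C = {(rp i j, l) | i j (l::int). 1 \<le> i \<and> i < j \<and> j \<le> m \<and> l \<ge> 1 \<and> x i - l * int p = x j}"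

  have finP: "finite P"
  proof -
    have "P \<subseteq> (\<Union>\<alpha>\<in>pos_roots m. {\<alpha>} \<times> {1..pair m x \<alpha>})"
    proof
      fix t assume "t \<in> P"
      then obtain \<alpha> l where t: "t = (\<alpha>,l)" "\<alpha> \<in> pos_roots m" "l \<ge> 1" "pair m x \<alpha> - l * int p > 0"
        unfolding Pdef by blast
      have "l * 1 \<le> l * int p" using t(3) p3 by (intro mult_left_mono) auto
      then have "l \<le> pair m x \<alpha>" using t by linarith
      then show "t \<in> (\<Union>\<alpha>\<in>pos_roots m. {\<alpha>} \<times> {1..pair m x \<alpha>})" using t by auto
    qed
    then show ?thesis by (rule finite_subset) (auto intro: finite_pos_roots)
  qed
  have RsubP: "R \<subseteq> P"
  proof
    fix t assume "t \<in> R"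
    moreover obtain \<alpha> l where t: "t = (\<alpha>,l)" by fastforce
    ultimately obtain i j where ij: "\<alpha> = rp i j" "1 \<le> i" "i < j" "j \<le> num_parts m lam" "l \<ge> 1" "pair m x \<alpha> - l*int p \<ge> 1"
      using Rmem by blast
    then have "\<alpha> \<in> pos_roots m" using num_parts_le[of m lam] unfolding pos_roots_cases by force
    then show "t \<in> P" using ij t unfolding Pdef by auto
  qed
  have T2subP: "T2 \<subseteq> P"
  proof
    fix t assume "t \<in> T2"
    then obtain i l where t: "t = (rl i, l)" "i \<in> {1..m}" "l \<ge> 1" "x i - l * int p > 0" unfolding T2_def by blast
    then have "rl i \<in> pos_roots m" unfolding pos_roots_cases by auto
    then show "t \<in> P" using t pair_rl[of i m x] unfolding Pdef by auto
  qed
  have CsubP: "C \<subseteq> P"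
  proof
    fix t assume "t \<in> C"
    then obtain i j l where t: "t = (rp i j, l)" "1 \<le> i" "i < j" "j \<le> m" "l \<ge> 1" "x i - l * int p = x j"
      unfolding C_def by blast
    then have "rp i j \<in> pos_roots m" unfolding pos_roots_cases by auto
    moreover have "x j \<ge> 1" using xpos t by auto
    ultimately show "t \<in> P" using t pair_rp[of i j m x] unfolding Pdef by auto
  qed
  have dRT: "R \<inter> T2 = {}"
  proof (rule ccontr)
    assume "R \<inter> T2 \<noteq> {}"
    then obtain \<alpha> l where a: "(\<alpha>,l) \<in> R" "(\<alpha>,l) \<in> T2" by auto
    from a(1) obtain i j where "\<alpha> = rp i j" "i < j" using Rmem by blast
    moreover from a(2) obtain i' where "\<alpha> = rl i'" unfolding T2_def by blast
    ultimately show False using rl_ne_rp by metis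
  qed
  have dTC: "T2 \<inter> C = {}"
  proof (rule ccontr)
    assume "T2 \<inter> C \<noteq> {}"
    then obtain \<alpha> l where a: "(\<alpha>,l) \<in> T2" "(\<alpha>,l) \<in> C" by auto
    from a(2) obtain i j where "\<alpha> = rp i j" "i < j" unfolding C_def by blast
    moreover from a(1) obtain i' where "\<alpha> = rl i'" unfolding T2_def by blast
    ultimately show False using rl_ne_rp by metis
  qed
  have dRC: "R \<inter> C = {}"
  proof (rule ccontr)
    assume "R \<inter> C \<noteq> {}"
    then obtain \<alpha> l where a: "(\<alpha>,l) \<in> R" "(\<alpha>,l) \<in> C" by auto
    from a(1) obtain i j where r: "\<alpha> = rp i j" "1 \<le> i" "i < j" "j \<le> num_parts m lam"
       "x j - (pair m x \<alpha> - l*int p) > 0" using Rmem by blast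
    from a(2) obtain i' j' where c: "\<alpha> = rp i' j'" "1 \<le> i'" "i' < j'" "j' \<le> m" "x i' - l * int p = x j'"
      unfolding C_def by blast
    have "i = i'" "j = j'" using rp_inj[OF r(3) c(3)] r(1) c(1) by auto
    moreover have "pair m x \<alpha> = x i + x j" using r pair_rp[of i j m x] num_parts_le[of m lam] by auto
    moreover have "x j' \<ge> 1" using xpos c by auto
    ultimately show False using r(5) c(5) by auto
  qed
  have zero: "f t = 0" if tP: "t \<in> P" and tn: "t \<notin> R" "t \<notin> T2" "t \<notin> C" for t
  proof -
    obtain \<alpha> l where t: "t = (\<alpha>,l)" "\<alpha> \<in> pos_roots m" "l \<ge> 1" "pair m x \<alpha> - l * int p > 0"
      using tP unfolding Pdef by blast
    have lp: "l * int p \<ge> 3" using t(3) lpge by blast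
    from t(2) consider (a) i j where "1\<le>i" "i<j" "j\<le>m" "\<alpha> = rp i j" | (b) i j where "1\<le>i" "i<j" "j\<le>m" "\<alpha> = rm i j"
      | (c) i where "1\<le>i" "i\<le>m" "\<alpha> = rl i" unfolding pos_roots_cases by blast
    then show ?thesis
    proof cases
      case (c i)
      then have "t \<in> T2" using t pair_rl[of i m x] unfolding T2_def by auto
      then show ?thesis using tn by blast
    next
      case (b i j)
      define a where "a = x i - x j - l * int p"
      have pa: "pair m x \<alpha> = x i - x j" using b pair_rm by simp
      have a0: "a > 0" using t(4) pa a_def by simp
      have "x j \<ge> 1" using xpos b by auto
      then obtain k where k: "k \<in> {1..m}" "x k = x i - l * int p" using core[of i l] b t(3) a0 a_def by auto
      have "k \<noteq> j" using k a0 a_def by auto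
      moreover have "k \<noteq> i" using k lp by auto
      ultimately have "\<not> regular m (\<lambda>k. x k - (pair m x \<alpha> - l * int p) * \<alpha> k)"
        using nonreg_eq[of j m k] k b a_def pa by (simp add: rm_val)
      then show ?thesis using chi0 fdef t(1) by simp
    next
      case (a i j)
      define z where "z = (\<lambda>k. x k - (pair m x \<alpha> - l * int p) * \<alpha> k)"
      have pa: "pair m x \<alpha> = x i + x j" using a pair_rp by simp
      define A where "A = x i + x j - l * int p"
      have A0: "A > 0" using t(4) pa A_def by simp
      have zi: "z i = x i - A" and zj: "z j = x j - A" and zk: "\<And>k. k \<noteq> i \<Longrightarrow> k \<noteq> j \<Longrightarrow> z k = x k"
        using a pa by (auto simp: z_def A_def rp_val)
      show ?thesis
      proof (cases "chi m (aff_dot m p \<alpha> l lam) = 0")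
        case True then show ?thesis using fdef t(1) by simp
      next
        case False
        then have reg: "regular m z" using chi0 unfolding z_def by blast
        have im: "i \<in> {1..m}" "j \<in> {1..m}" using a by auto
        have c1: "x j - A > 0"
        proof (rule ccontr)
          assume "\<not> x j - A > 0"
          then have "l * int p \<le> x i" using A_def by simp
          then consider "l * int p = x i" | "l * int p < x i" by linarith
          then show False
          proof cases
            case 1
            then have "z j = 0" using zj A_def by simp
            then show False using nonreg_zero[OF im(2)] reg by blast
          next
            case 2
            then obtain k where k: "k \<in> {1..m}" "x k = x i - l * int p" using core[of i l] im t(3) by auto
            have "k \<noteq> i" using k lp by auto
            moreover have "k \<noteq> j"
            proof
              assume "k = j"
              then have "x i - l * int p = x j" using k by simp
              then have "t \<in> C" using t(1) a t(3) unfolding C_def by fastforce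
              then show False using tn by blast
            qed
            ultimately have "\<bar>z k\<bar> = \<bar>z j\<bar>" using zk zj k A_def by simp
            then show False using nonreg_eq[OF k(1) im(2) \<open>k \<noteq> j\<close>] reg by blast
          qed
        qed
        have c2: "j \<le> num_parts m lam"
        proof (rule ccontr)
          assume "\<not> j \<le> num_parts m lam"
          then have l0: "lam j = 0" using num_parts_ge[OF dom im(2)] by blast
          define v where "v = x j - A"
          have v: "0 < v" "v < x j" using c1 A0 v_def by auto
          have xj: "x j = int m + 1 - int j" using xval[OF im(2)] l0 by simp
          define k where "k = nat (int m + 1 - v)"
          have kv: "int k = int m + 1 - v" using v xj unfolding k_def by simp
          have kj: "j < k" "k \<le> m" using kv v xj by linarith+
          have "lam k = 0" using lamdec[of j k] lam0[of k] kj l0 a by auto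
          then have "x k = v" using xval[of k] kv kj a by simp
          moreover have "k \<noteq> i" "k \<noteq> j" using kj a by auto
          ultimately have "\<bar>z k\<bar> = \<bar>z j\<bar>" using zk zj v_def by simp
          moreover have "k \<in> {1..m}" using kj a by auto
          ultimately show False using nonreg_eq[of k m j z] im reg \<open>k \<noteq> j\<close> by blast
        qed
        have "t \<in> R" unfolding t(1) Rmem
          apply (rule exI[of _ i], rule exI[of _ j], intro conjI)
          using a t(3) c1 c2 A0 False pa A_def
          apply simp_all
          done
        then show ?thesis using tn by blast
      qed
    qed
  qed
  define h where "h = (\<lambda>(\<alpha>::weight, l::int). (rl (LEAST k. \<alpha> k \<noteq> 0), l))"
  have hC: "\<And>i j l. i < j \<Longrightarrow> h (rp i j, l) = (rl i, l)"
  proof -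
    fix i j :: nat and l :: int assume ij: "i < j"
    have "(LEAST k. rp i j k \<noteq> 0) = i"
      by (rule Least_equality) (use ij in \<open>auto simp: rp_val split: if_splits\<close>)
    then show "h (rp i j, l) = (rl i, l)" by (simp add: h_def)
  qed
  have injh: "inj_on h C"
  proof (rule inj_onI)
    fix c c' assume c: "c \<in> C" and c': "c' \<in> C" and e: "h c = h c'"
    from c obtain i j l where ci: "c = (rp i j, l)" "1 \<le> i" "i < j" "j \<le> m" "x i - l * int p = x j"
      unfolding C_def by blast
    from c' obtain i' j' l' where ci': "c' = (rp i' j', l')" "1 \<le> i'" "i' < j'" "j' \<le> m" "x i' - l' * int p = x j'"
      unfolding C_def by blast
    have "rl i = rl i'" "l = l'" using e ci ci' hC by auto
    then have "i = i'" "l = l'" using rl_inj by auto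
    then have "x j = x j'" using ci ci' by simp
    then have "j = j'" using xinj ci ci' by auto
    then show "c = c'" using ci ci' \<open>i = i'\<close> \<open>l = l'\<close> by simp
  qed
  have himg: "h ` C = T2"
  proof
    show "h ` C \<subseteq> T2"
    proof
      fix t assume "t \<in> h ` C"
      then obtain i j l where ci: "t = h (rp i j, l)" "1 \<le> i" "i < j" "j \<le> m" "l \<ge> 1" "x i - l * int p = x j"
        unfolding C_def by blast
      have "x j \<ge> 1" using xpos ci by auto
      then show "t \<in> T2" using ci hC unfolding T2_def by auto
    qed
  next
    show "T2 \<subseteq> h ` C"
    proof
      fix t assume "t \<in> T2"
      then obtain i l where ti: "t = (rl i, l)" "i \<in> {1..m}" "l \<ge> 1" "x i - l * int p > 0" unfolding T2_def by blast
      then obtain k where k: "k \<in> {1..m}" "x k = x i - l * int p" using core by blast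
      have "i < k" using xlt[OF ti(2) k(1)] k lpge[OF ti(3)] by simp
      have "x i - l * int p = x k" "1 \<le> i" "k \<le> m" using k ti by auto
      then have "(rp i k, l) \<in> C" using ti \<open>i < k\<close> unfolding C_def by blast
      then show "t \<in> h ` C" using hC[OF \<open>i < k\<close>, of l] ti by (metis image_eqI)
    qed
  qed
  have fh: "f (h c) = - f c" if c: "c \<in> C" for c
  proof -
    from c obtain i j l where ci: "c = (rp i j, l)" "1 \<le> i" "i < j" "j \<le> m" "x i - l * int p = x j"
      unfolding C_def by blast
    have pr: "pair m x (rp i j) = x i + x j" using ci pair_rp by simp
    have pl: "pair m x (rl i) = x i" using ci pair_rl by simp
    have jm: "j \<in> {1..m}" using ci by auto
    have "chi m (aff_dot m p (rp i j) l lam) = - chi m (aff_dot m p (rl i) l lam)"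
    proof (rule chi_flip[OF jm])
      fix k
      have e1: "aff_dot m p (rp i j) l lam k + rho m k = x k - (pair m x (rp i j) - l * int p) * rp i j k"
        using fun_cong[OF affv[of "rp i j" l], of k] by simp
      have e2: "aff_dot m p (rl i) l lam k + rho m k = x k - (pair m x (rl i) - l * int p) * rl i k"
        using fun_cong[OF affv[of "rl i" l], of k] by simp
      show "aff_dot m p (rp i j) l lam k + rho m k =
          (if k = j then - (aff_dot m p (rl i) l lam k + rho m k) else aff_dot m p (rl i) l lam k + rho m k)"
        unfolding e1 e2 pr pl using ci by (auto simp: rp_val rl_val algebra_simps)
    qed
    then show ?thesis using ci hC fdef by simp
  qed
  have cancel: "sum f T2 + sum f C = 0"
  proof -
    have "sum f T2 = sum (f \<circ> h) C" using sum.reindex[OF injh, of f] himg by simp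
    also have "\<dots> = sum (\<lambda>c. - f c) C" using fh by (intro sum.cong) auto
    finally show ?thesis by (simp add: sum_negf)
  qed
  have finR: "finite R" and finT: "finite T2" and finC: "finite C"
    using finP RsubP T2subP CsubP finite_subset by blast+
  have "sum f P = sum f (R \<union> T2 \<union> C)"
  proof (rule sum.mono_neutral_right[OF finP])
    show "R \<union> T2 \<union> C \<subseteq> P" using RsubP T2subP CsubP by blast
    show "\<forall>t\<in>P - (R \<union> T2 \<union> C). f t = 0" using zero by blast
  qed
  also have "\<dots> = sum f (R \<union> T2) + sum f C"
    using dRC dTC finR finT finC by (intro sum.union_disjoint) auto
  also have "\<dots> = sum f R + sum f T2 + sum f C"
    using dRT finR finT by (simp add: sum.union_disjoint)
  also have "\<dots> = sum f R" using cancel by simp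
  finally show ?thesis unfolding f_def P_def R_def .
qed


end
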